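(* Let $P^\ast$ be an $n\times k$ minimal matrix representation of a $0/1$-polytope with $k$ vertices, and let $w_k^\top=(2^{k-1},\dots,2^1,2^0)$. Then the entries of the vector $P^\ast w_k$ are non-increasing from top to bottom.
   Context: For $x\in\{0,1\}^n$ its column number is $v_n^\top x$ with $v_n^\top=(2^0,2^1,\dots,2^{n-1})$. For an $n\times m$ $0/1$-matrix $P$ with pairwise distinct columns, $\nu(P)$ is the vector of its column numbers sorted increasingly. $P$ is a minimal matrix representation if its column numbers $v_n^\top P$ are strictly increasing from left to right and $\nu(P)\preceq\nu(Q)$ in lexicographic order for every matrix $Q$ obtained from $P$ by complementing (exchanging $0\leftrightarrow1$) the entries of some subset of its rows and then permuting its rows. *)

theory Defs
  imports Main
begin

text \<open>An n x m 0/1-matrix is represented as a function P :: nat => nat => nat,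
  P i j being the entry in row i (0-based, top row i = 0) and column j (0-based,
  leftmost j = 0); only entries with i < n, j < m are relevant.\<close>

definition is01 :: "nat \<Rightarrow> nat \<Rightarrow> (nat \<Rightarrow> nat \<Rightarrow> nat) \<Rightarrow> bool" where
  "is01 n m P \<longleftrightarrow> (\<forall>i<n. \<forall>j<m. P i j \<in> {0, 1})"

definition colnum :: "nat \<Rightarrow> (nat \<Rightarrow> nat \<Rightarrow> nat) \<Rightarrow> nat \<Rightarrow> nat" where
  "colnum n P j = (\<Sum>i<n. 2 ^ i * P i j)"

definition distinct_cols :: "nat \<Rightarrow> nat \<Rightarrow> (nat \<Rightarrow> nat \<Rightarrow> nat) \<Rightarrow> bool" where
  "distinct_cols n m P \<longleftrightarrow>
     (\<forall>j<m. \<forall>j'<m. j \<noteq> j' \<longrightarrow> (\<exists>i<n. P i j \<noteq> P i j'))"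

definition nu :: "nat \<Rightarrow> nat \<Rightarrow> (nat \<Rightarrow> nat \<Rightarrow> nat) \<Rightarrow> nat list" where
  "nu n m P = sort (map (colnum n P) [0..<m])"

definition lex_le :: "nat list \<Rightarrow> nat list \<Rightarrow> bool" where
  "lex_le xs ys \<longleftrightarrow> xs = ys \<or> (xs, ys) \<in> lexord {(a, b). a < b}"

definition switch_perm :: "nat set \<Rightarrow> (nat \<Rightarrow> nat) \<Rightarrow> (nat \<Rightarrow> nat \<Rightarrow> nat) \<Rightarrow> (nat \<Rightarrow> nat \<Rightarrow> nat)" where
  "switch_perm S \<sigma> P = (\<lambda>i j. if \<sigma> i \<in> S then 1 - P (\<sigma> i) j else P (\<sigma> i) j)"

definition minimal_rep :: "nat \<Rightarrow> nat \<Rightarrow> (nat \<Rightarrow> nat \<Rightarrow> nat) \<Rightarrow> bool" where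
  "minimal_rep n m P \<longleftrightarrow>
     is01 n m P \<and> distinct_cols n m P \<and>
     (\<forall>j j'. j < j' \<and> j' < m \<longrightarrow> colnum n P j < colnum n P j') \<and>
     (\<forall>S \<sigma>. S \<subseteq> {..<n} \<and> bij_betw \<sigma> {..<n} {..<n} \<longrightarrow>
        lex_le (nu n m P) (nu n m (switch_perm S \<sigma> P)))"

definition rownum_w :: "nat \<Rightarrow> (nat \<Rightarrow> nat \<Rightarrow> nat) \<Rightarrow> nat \<Rightarrow> nat" where
  "rownum_w m P i = (\<Sum>j<m. P i j * 2 ^ (m - 1 - j))"

end

theory Submission
  imports Defs
begin

definition bv :: "nat \<Rightarrow> (nat \<Rightarrow> nat) \<Rightarrow> nat" where
  "bv n g = (\<Sum>r<n. 2 ^ r * g r)"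

lemma bv_bound: "\<forall>r<n. g r \<in> {0,1} \<Longrightarrow> bv n g < 2 ^ n"
proof (induction n)
  case 0 then show ?case by (simp add: bv_def)
next
  case (Suc m)
  have "bv m g < 2 ^ m" using Suc by auto
  have "g m \<le> 1" using Suc.prems by auto
  then have "2 ^ m * g m \<le> (2::nat) ^ m" by simp
  with \<open>bv m g < 2 ^ m\<close> have "bv m g + 2 ^ m * g m < 2 ^ Suc m" unfolding power_Suc by linarith
  then show ?case by (simp add: bv_def)
qed

lemma bv_less:
  assumes "\<forall>r<n. g r \<in> {0,1}" "\<forall>r<n. h r \<in> {0,1}" "r0 < n" "g r0 = 0" "h r0 = 1"
    "\<forall>r. r0 < r \<and> r < n \<longrightarrow> g r = h r"
  shows "bv n g < bv n h"
  using assms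
proof (induction n)
  case 0 then show ?case by simp
next
  case (Suc m)
  show ?case
  proof (cases "r0 = m")
    case True
    have "bv m g < 2 ^ m" using Suc.prems by (intro bv_bound) auto
    then show ?thesis using True Suc.prems by (simp add: bv_def)
  next
    case False
    then have "r0 < m" using Suc.prems by auto
    then have "bv m g < bv m h" using Suc by auto
    moreover have "g m = h m" using Suc.prems \<open>r0 < m\<close> by auto
    ultimately show ?thesis by (simp add: bv_def)
  qed
qed

lemma bv_diff:
  assumes "\<forall>r<n. g r \<in> {0,1}" "\<forall>r<n. h r \<in> {0,1}" "bv n g < bv n h"
  shows "\<exists>r0<n. g r0 = 0 \<and> h r0 = 1 \<and> (\<forall>r. r0 < r \<and> r < n \<longrightarrow> g r = h r)"
proof -
  define D where "D = {r. r < n \<and> g r \<noteq> h r}"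
  have "D \<noteq> {}"
  proof
    assume "D = {}"
    then have "\<forall>r<n. g r = h r" by (auto simp: D_def)
    then have "bv n g = bv n h" unfolding bv_def by (intro sum.cong) auto
    with assms(3) show False by simp
  qed
  have fD: "finite D" by (auto simp: D_def)
  define r0 where "r0 = Max D"
  have r0D: "r0 \<in> D" using fD \<open>D \<noteq> {}\<close> r0_def by simp
  have above: "\<forall>r. r0 < r \<and> r < n \<longrightarrow> g r = h r"
  proof (intro allI impI)
    fix r assume rr: "r0 < r \<and> r < n"
    show "g r = h r"
    proof (rule ccontr)
      assume "g r \<noteq> h r"
      then have "r \<in> D" using rr by (simp add: D_def)
      then have "r \<le> r0" using Max_ge[OF fD] r0_def by simp
      with rr show False by simp
    qed
  qed
  from r0D have "r0 < n" "g r0 \<noteq> h r0" by (auto simp: D_def)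
  moreover have "\<not> (g r0 = 1 \<and> h r0 = 0)"
  proof
    assume "g r0 = 1 \<and> h r0 = 0"
    then have "bv n h < bv n g" using assms \<open>r0 < n\<close> above by (intro bv_less[of n h g r0]) auto
    with assms(3) show False by simp
  qed
  ultimately have "g r0 = 0 \<and> h r0 = 1" using assms(1,2) by fastforce
  then show ?thesis using \<open>r0 < n\<close> above by blast
qed

lemma bv_inj:
  assumes "\<forall>r<n. g r \<in> {0,1}" "\<forall>r<n. h r \<in> {0,1}" "bv n g = bv n h"
  shows "\<forall>r<n. g r = h r"
proof (rule ccontr)
  assume "\<not> (\<forall>r<n. g r = h r)"
  define D where "D = {r. r < n \<and> g r \<noteq> h r}"
  have "D \<noteq> {}" using \<open>\<not> (\<forall>r<n. g r = h r)\<close> by (auto simp: D_def)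
  have fD: "finite D" by (auto simp: D_def)
  define r0 where "r0 = Max D"
  have r0D: "r0 \<in> D" using fD \<open>D \<noteq> {}\<close> r0_def by simp
  have above: "\<forall>r. r0 < r \<and> r < n \<longrightarrow> g r = h r"
  proof (intro allI impI)
    fix r assume rr: "r0 < r \<and> r < n"
    show "g r = h r"
    proof (rule ccontr)
      assume "g r \<noteq> h r"
      then have "r \<in> D" using rr by (simp add: D_def)
      then have "r \<le> r0" using Max_ge[OF fD] r0_def by simp
      with rr show False by simp
    qed
  qed
  from r0D have r0n: "r0 < n" and ne: "g r0 \<noteq> h r0" by (auto simp: D_def)
  have "(g r0 = 0 \<and> h r0 = 1) \<or> (g r0 = 1 \<and> h r0 = 0)" using assms(1,2) r0n ne by fastforce
  then show False
  proof
    assume "g r0 = 0 \<and> h r0 = 1"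
    then have "bv n g < bv n h" using assms r0n above by (intro bv_less) auto
    with assms(3) show False by simp
  next
    assume "g r0 = 1 \<and> h r0 = 0"
    then have "bv n h < bv n g" using assms r0n above by (intro bv_less) auto
    with assms(3) show False by simp
  qed
qed

lemma lex_key:
  fixes xs ys :: "nat list"
  assumes "sorted xs" "sorted ys" "distinct ys" "length xs = length ys"
    "a \<in> set xs" "a \<notin> set ys" "\<forall>b\<in>set ys - set xs. a < b"
  shows "(xs, ys) \<in> lexord {(a, b). a < b}"
  using assms
proof (induction xs arbitrary: ys)
  case Nil then show ?case by simp
next
  case (Cons x xs')
  then obtain y ys' where ys: "ys = y # ys'" by (cases ys) auto
  consider "x = y" | "x < y" | "y < x" by linarith
  then show ?case
  proof cases
    case 1
    have "(xs', ys') \<in> lexord {(a, b). a < b}"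
    proof (rule Cons.IH)
      show "sorted xs'" "sorted ys'" "distinct ys'" "length xs' = length ys'"
        using Cons.prems ys by auto
      show "a \<in> set xs'" "a \<notin> set ys'" using Cons.prems ys 1 by auto
      show "\<forall>b\<in>set ys' - set xs'. a < b" using Cons.prems ys 1 by auto
    qed
    then show ?thesis using ys 1 by simp
  next
    case 2 then show ?thesis using ys by simp
  next
    case 3
    have "y \<notin> set (x # xs')" using 3 Cons.prems(1) by auto
    then have "a < y" using Cons.prems(7) ys by auto
    moreover have "x \<le> a" using Cons.prems(1,5) by auto
    ultimately show ?thesis using 3 by simp
  qed
qed

lemma rownum_bv: "rownum_w k P i = bv k (\<lambda>r. P i (k - Suc r))"
  unfolding rownum_w_def bv_def
  apply (subst sum.nat_diff_reindex[symmetric])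
  apply (rule sum.cong)
   apply simp
  apply (simp add: Suc_diff_Suc)
  done

theorem lemma4p13:
  fixes n k :: nat and P :: "nat \<Rightarrow> nat \<Rightarrow> nat"
  assumes "minimal_rep n k P"
  shows "\<forall>i i'. i \<le> i' \<and> i' < n \<longrightarrow> rownum_w k P i' \<le> rownum_w k P i"
proof (intro allI impI, rule ccontr)
  fix i i'
  assume ii: "i \<le> i' \<and> i' < n" and nle: "\<not> rownum_w k P i' \<le> rownum_w k P i"
  note A = assms[unfolded minimal_rep_def]
  have p01: "\<forall>r<n. \<forall>j<k. P r j \<in> {0,1}" using conjunct1[OF A] unfolding is01_def .
  have dc: "distinct_cols n k P" using conjunct1[OF conjunct2[OF A]] .
  have mono: "\<forall>j j'. j < j' \<and> j' < k \<longrightarrow> colnum n P j < colnum n P j'"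
    using conjunct1[OF conjunct2[OF conjunct2[OF A]]] .
  have minl: "\<forall>S \<sigma>. S \<subseteq> {..<n} \<and> bij_betw \<sigma> {..<n} {..<n} \<longrightarrow>
        lex_le (nu n k P) (nu n k (switch_perm S \<sigma> P))"
    using conjunct2[OF conjunct2[OF conjunct2[OF A]]] .
  have lt: "rownum_w k P i < rownum_w k P i'" using nle by simp
  then have "i \<noteq> i'" by auto
  with ii have iltii: "i < i'" and i'n: "i' < n" by auto
  have lt2: "bv k (\<lambda>r. P i (k - Suc r)) < bv k (\<lambda>r. P i' (k - Suc r))"
    using lt by (simp add: rownum_bv)
  have z1: "\<forall>r<k. P i (k - Suc r) \<in> {0,1}" using p01 ii by auto
  have z2: "\<forall>r<k. P i' (k - Suc r) \<in> {0,1}" using p01 ii by auto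
  have "\<exists>r0<k. P i (k - Suc r0) = 0 \<and> P i' (k - Suc r0) = 1 \<and>
     (\<forall>r. r0 < r \<and> r < k \<longrightarrow> P i (k - Suc r) = P i' (k - Suc r))"
    by (rule bv_diff[OF z1 z2 lt2])
  then obtain r0 where r0: "r0 < k" "P i (k - Suc r0) = 0" "P i' (k - Suc r0) = 1"
     "\<forall>r. r0 < r \<and> r < k \<longrightarrow> P i (k - Suc r) = P i' (k - Suc r)"
    by blast
  define j0 where "j0 = k - Suc r0"
  have j0k: "j0 < k" using r0 j0_def by simp
  have Pj0: "P i j0 = 0" "P i' j0 = 1" using r0 j0_def by auto
  have agree: "P i j = P i' j" if "j < j0" for j
  proof -
    have "r0 < k - Suc j" "k - Suc j < k" using that j0_def r0 by auto
    then have "P i (k - Suc (k - Suc j)) = P i' (k - Suc (k - Suc j))" using r0 by blast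
    moreover have "k - Suc (k - Suc j) = j" using that j0k by simp
    ultimately show ?thesis by simp
  qed
  define \<sigma> where "\<sigma> = (\<lambda>x::nat. if x = i then i' else if x = i' then i else x)"
  have ss: "\<sigma> (\<sigma> x) = x" for x by (simp add: \<sigma>_def)
  have sn: "x < n \<Longrightarrow> \<sigma> x < n" for x using ii by (simp add: \<sigma>_def)
  have bij: "bij_betw \<sigma> {..<n} {..<n}"
    by (rule bij_betw_byWitness[where f'=\<sigma>]) (auto simp: ss sn)
  define Q where "Q = switch_perm {} \<sigma> P"
  have Q: "Q r j = P (\<sigma> r) j" for r j by (simp add: Q_def switch_perm_def)
  define c where "c = colnum n P"
  define d where "d = colnum n Q"
  have c_bv: "c j = bv n (\<lambda>r. P r j)" for j by (simp add: c_def colnum_def bv_def)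
  have d_bv: "d j = bv n (\<lambda>r. P (\<sigma> r) j)" for j by (simp add: d_def colnum_def bv_def Q)
  have dc_eq: "d j = c j" if "j < j0" for j
  proof -
    have "P (\<sigma> r) j = P r j" for r using agree[OF that] by (simp add: \<sigma>_def)
    then show ?thesis by (simp add: c_bv d_bv)
  qed
  have dlt: "d j0 < c j0"
    unfolding c_bv d_bv
  proof (rule bv_less[of n "\<lambda>r. P (\<sigma> r) j0" "\<lambda>r. P r j0" i'])
    show "\<forall>r<n. P (\<sigma> r) j0 \<in> {0, 1}" using p01 sn j0k by auto
    show "\<forall>r<n. P r j0 \<in> {0, 1}" using p01 j0k by auto
    show "i' < n" by fact
    show "P (\<sigma> i') j0 = 0" using Pj0 by (simp add: \<sigma>_def)
    show "P i' j0 = 1" by fact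
    show "\<forall>r. i' < r \<and> r < n \<longrightarrow> P (\<sigma> r) j0 = P r j0" using iltii by (simp add: \<sigma>_def)
  qed
  have cmono: "j < j' \<Longrightarrow> j' < k \<Longrightarrow> c j < c j'" for j j' using mono c_def by blast
  have cle: "j \<le> j' \<Longrightarrow> j' < k \<Longrightarrow> c j \<le> c j'" for j j'
    using cmono by (cases "j = j'") (auto simp: less_imp_le)
  define ys where "ys = map c [0..<k]"
  define xs where "xs = sort (map d [0..<k])"
  have sys: "sorted ys" unfolding ys_def sorted_iff_nth_mono by (auto intro!: cle)
  have nuP: "nu n k P = ys" unfolding nu_def ys_def c_def[symmetric]
    using sys ys_def by (simp add: sorted_sort_id)
  have nuQ: "nu n k (switch_perm {} \<sigma> P) = xs" unfolding nu_def xs_def d_def Q_def by simp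
  have injc: "inj_on c {0..<k}"
  proof (rule inj_onI)
    fix x y assume "x \<in> {0..<k}" "y \<in> {0..<k}" "c x = c y"
    then show "x = y" using cmono[of x y] cmono[of y x] by (cases x y rule: linorder_cases) auto
  qed
  have dys: "distinct ys" unfolding ys_def by (simp add: distinct_map injc)
  have lex: "(xs, ys) \<in> lexord {(a, b). a < b}"
  proof (rule lex_key[where a="d j0"])
    show "sorted xs" "sorted ys" "distinct ys" "length xs = length ys"
      using sys dys by (auto simp: xs_def ys_def)
    show "d j0 \<in> set xs" using j0k by (simp add: xs_def)
    show "d j0 \<notin> set ys"
    proof
      assume "d j0 \<in> set ys"
      then obtain j where j: "j < k" "d j0 = c j" by (auto simp: ys_def)
      show False
      proof (cases "j0 \<le> j")
        case True
        then show False using cle[OF True j(1)] dlt j by simp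
      next
        case False
        then have jj: "j < j0" by simp
        then have e1: "bv n (\<lambda>r. P (\<sigma> r) j) = bv n (\<lambda>r. P (\<sigma> r) j0)"
          using j dc_eq[OF jj] by (simp add: d_bv)
        have z3: "\<forall>r<n. P (\<sigma> r) j \<in> {0, 1}" using p01 sn j0k j by auto
        have z4: "\<forall>r<n. P (\<sigma> r) j0 \<in> {0, 1}" using p01 sn j0k j by auto
        have eq: "\<forall>r<n. P (\<sigma> r) j = P (\<sigma> r) j0" by (rule bv_inj[OF z3 z4 e1])
        have "\<forall>r<n. P r j = P r j0"
        proof (intro allI impI)
          fix r assume "r < n"
          then have "P (\<sigma> (\<sigma> r)) j = P (\<sigma> (\<sigma> r)) j0" using eq[rule_format, OF sn[OF \<open>r < n\<close>]] by simp
          then show "P r j = P r j0" by (simp add: ss)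
        qed
        moreover have "\<exists>r<n. P r j \<noteq> P r j0" using dc j(1) j0k jj unfolding distinct_cols_def by simp
        ultimately show False by blast
      qed
    qed
    show "\<forall>b\<in>set ys - set xs. d j0 < b"
    proof
      fix b assume b: "b \<in> set ys - set xs"
      then obtain j where j: "j < k" "b = c j" by (auto simp: ys_def)
      show "d j0 < b"
      proof (cases "j < j0")
        case True
        then have "b \<in> set xs" using j dc_eq[OF True] by (auto simp: xs_def intro!: image_eqI[where x=j])
        then show ?thesis using b by simp
      next
        case False
        then show ?thesis using cle[of j0 j] j dlt by simp
      qed
    qed
  qed
  have le: "lex_le (nu n k P) (nu n k (switch_perm {} \<sigma> P))"
    using minl bij by blast
  have tr: "trans {(a, b). (a::nat) < b}" by (auto simp: trans_def)
  have "(xs, xs) \<in> lexord {(a, b). (a::nat) < b}"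
  proof (cases "ys = xs")
    case True then show ?thesis using lex by simp
  next
    case False
    then have "(ys, xs) \<in> lexord {(a, b). (a::nat) < b}" using le nuP nuQ by (simp add: lex_le_def)
    then show ?thesis using lexord_trans[OF lex _ tr] by blast
  qed
  moreover have "(xs, xs) \<notin> lexord {(a, b). (a::nat) < b}" by (rule lexord_irreflexive) simp
  ultimately show False by blast
qed

end
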